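(* Let $\mathcal H=\mathcal H_-\oplus\mathcal H_+$, $\Omega$, $\mathbb U$, $A,B,C,D$, $\tau$ and $T$ be as in the context, and assume that $\mathcal H=\mathbb U(T)\oplus\mathcal H_-$. Then $C\tau+D:\mathcal H_+\to\mathcal H_+$ is a bounded linear isomorphism, and the propagator satisfies $\Delta^{\alpha\beta}=-\big[(C\tau+D)^{-1}C\big]^{\alpha\beta}$ (matrix coefficients with respect to the bases $\{e^\alpha\}$, $\{f_\alpha\}$). In particular, if $C$ is of trace class then $\Delta$, viewed as a linear operator $T'\to T$, is of trace class.
   Context: $\mathcal H$ is a separable complex Hilbert space with orthonormal basis $\{e^\alpha,f_\alpha:\alpha\in\mathbb Z_{\ge0}\}$ and symplectic form $\Omega$ with $\Omega(e^\alpha,f_\beta)=\delta_{\alpha\beta}$, $\Omega(e^\alpha,e^\beta)=\Omega(f_\alpha,f_\beta)=0$; $\mathcal H_-$ is the closed span of the $e^\alpha$ and $\mathcal H_+$ that of the $f_\alpha$; $q^\alpha$ denote the linear coordinates on $\mathcal H_+$ dual to $f_\alpha$. $\mathbb U$ is a bounded symplectic automorphism of $\mathcal H$ written in block form $\mathbb U=\begin{pmatrix}A&B\\C&D\end{pmatrix}$ with respect to $\mathcal H=\mathcal H_-\oplus\mathcal H_+$, i.e. $A:\mathcal H_-\to\mathcal H_-$, $B:\mathcal H_+\to\mathcal H_-$, $C:\mathcal H_-\to\mathcal H_+$, $D:\mathcal H_+\to\mathcal H_+$, with matrix entries $Ce^\beta=\sum_\alpha C^{\alpha\beta}f_\alpha$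 etc. $\tau:\mathcal H_+\to\mathcal H_-$ is a bounded operator that is symmetric ($\tau_{\alpha\beta}=\tau_{\beta\alpha}$ where $\tau f_\beta=\sum_\alpha\tau_{\alpha\beta}e^\alpha$), e.g. the Hessian $\tau_{\alpha\beta}=\partial^2C^{(0)}/\partial q^\alpha\partial q^\beta$ of a holomorphic function whose differential graph is a Lagrangian submanifold; $T=\{\tau\mathbf q+\mathbf q:\mathbf q\in\mathcal H_+\}$ is the corresponding Lagrangian subspace (the tangent space of that graph), so $\mathcal H=T\oplus\mathcal H_-$ and the coordinates $q^\alpha$ restrict to coordinates on $T$, whose differentials $dq^\alpha$ form the dual basis of $T'$. Under the assumption $\mathcal H=\mathbb U(T)\oplus\mathcal H_-$ one also has $\mathcal H=T\oplus\mathbb U^{-1}\mathcal H_-$, and $v\mapsto\Omega(v,\cdot)|_T$ defines isomorphisms $\sharp_1:\mathcal H_-\to T'$ and $\sharp_2:\mathbb U^{-1}\mathcal H_-\to T'$. The propagator is the bilinear form on $T'$ given by $\Delta(v_1,v_2)=\Omega(\sharp_1^{-1}v_1,\sharp_2^{-1}v_2)$, and $\Delta^{\alpha\beta}:=\Delta(dq^\alpha,dq^\beta)$. *)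

theory Defs
  imports Complex_Main
begin

text \<open>Model: H_- and H_+ are each identified with l2(nat) via the orthonormal bases
  e^alpha resp. f_alpha; a vector of H is a pair (x, y) where x are the e-coefficients
  (H_- part) and y the f-coefficients (H_+ part).  Operators are functions on
  nat => complex, of which only the values on l2 matter.\<close>

type_synonym seq = "nat \<Rightarrow> complex"
type_synonym op = "seq \<Rightarrow> seq"
type_synonym hvec = "seq \<times> seq"

definition l2 :: "seq set" where
  "l2 = {x. summable (\<lambda>n. (cmod (x n))^2)}"

definition l2_norm :: "seq \<Rightarrow> real" where
  "l2_norm x = sqrt (\<Sum>n. (cmod (x n))^2)"

definition l2_inner :: "seq \<Rightarrow> seq \<Rightarrow> complex" where
  "l2_inner x y = (\<Sum>n. x n * cnj (y n))"

definition bounded_op :: "op \<Rightarrow> bool" where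
  "bounded_op L \<longleftrightarrow>
     (\<forall>x\<in>l2. L x \<in> l2) \<and>
     (\<forall>x\<in>l2. \<forall>y\<in>l2. \<forall>a b. L (\<lambda>n. a * x n + b * y n) = (\<lambda>n. a * L x n + b * L y n)) \<and>
     (\<exists>K. \<forall>x\<in>l2. l2_norm (L x) \<le> K * l2_norm x)"

definition basis_vec :: "nat \<Rightarrow> seq" where
  "basis_vec \<beta> = (\<lambda>n. if n = \<beta> then 1 else 0)"

definition coeff :: "op \<Rightarrow> nat \<Rightarrow> nat \<Rightarrow> complex" where
  "coeff L \<alpha> \<beta> = L (basis_vec \<beta>) \<alpha>"

definition HH :: "hvec set" where
  "HH = l2 \<times> l2"

text \<open>Symplectic form: Omega(e^a, f_b) = delta_ab, Omega(e,e) = Omega(f,f) = 0 (complex bilinear).\<close>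
definition omega :: "hvec \<Rightarrow> hvec \<Rightarrow> complex" where
  "omega v w = (\<Sum>a. fst v a * snd w a) - (\<Sum>a. snd v a * fst w a)"

definition Hminus :: "hvec set" where
  "Hminus = {v. fst v \<in> l2 \<and> snd v = (\<lambda>_. 0)}"

definition vadd :: "hvec \<Rightarrow> hvec \<Rightarrow> hvec" where
  "vadd v w = (\<lambda>n. fst v n + fst w n, \<lambda>n. snd v n + snd w n)"

definition hzero :: hvec where
  "hzero = (\<lambda>_. 0, \<lambda>_. 0)"

definition blockop :: "op \<Rightarrow> op \<Rightarrow> op \<Rightarrow> op \<Rightarrow> hvec \<Rightarrow> hvec" where
  "blockop A B C D = (\<lambda>v. (\<lambda>n. A (fst v) n + B (snd v) n, \<lambda>n. C (fst v) n + D (snd v) n))"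

text \<open>Symplectic automorphism (linearity/boundedness come from the blocks).\<close>
definition symplectic_aut :: "(hvec \<Rightarrow> hvec) \<Rightarrow> bool" where
  "symplectic_aut U \<longleftrightarrow> bij_betw U HH HH \<and> (\<forall>v\<in>HH. \<forall>w\<in>HH. omega (U v) (U w) = omega v w)"

definition lagr_T :: "op \<Rightarrow> hvec set" where
  "lagr_T \<tau> = {(\<tau> q, q) | q. q \<in> l2}"

definition direct_sum_H :: "hvec set \<Rightarrow> hvec set \<Rightarrow> bool" where
  "direct_sum_H X Y \<longleftrightarrow> (\<forall>v\<in>HH. \<exists>x\<in>X. \<exists>y\<in>Y. v = vadd x y) \<and> X \<inter> Y = {hzero}"

definition dq :: "nat \<Rightarrow> hvec \<Rightarrow> complex" where
  "dq \<alpha> t = snd t \<alpha>"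

text \<open>Inverses of sharp_1 : H_- -> T' and sharp_2 : U^{-1} H_- -> T', v |-> Omega(v, .)|_T.\<close>
definition sharp1_inv :: "op \<Rightarrow> (hvec \<Rightarrow> complex) \<Rightarrow> hvec" where
  "sharp1_inv \<tau> \<phi> = (THE v. v \<in> Hminus \<and> (\<forall>t\<in>lagr_T \<tau>. omega v t = \<phi> t))"

definition sharp2_inv :: "(hvec \<Rightarrow> hvec) \<Rightarrow> op \<Rightarrow> (hvec \<Rightarrow> complex) \<Rightarrow> hvec" where
  "sharp2_inv U \<tau> \<phi> = (THE v. v \<in> HH \<and> U v \<in> Hminus \<and> (\<forall>t\<in>lagr_T \<tau>. omega v t = \<phi> t))"

definition propagator :: "(hvec \<Rightarrow> hvec) \<Rightarrow> op \<Rightarrow> nat \<Rightarrow> nat \<Rightarrow> complex" where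
  "propagator U \<tau> \<alpha> \<beta> = omega (sharp1_inv \<tau> (dq \<alpha>)) (sharp2_inv U \<tau> (dq \<beta>))"

definition CtauD :: "op \<Rightarrow> op \<Rightarrow> op \<Rightarrow> op" where
  "CtauD C D \<tau> = (\<lambda>q n. C (\<tau> q) n + D q n)"

text \<open>Trace class (= nuclear) operators on l2: L v = sum_n <v, x_n> y_n with
  sum_n |x_n| |y_n| < infinity.\<close>
definition trace_class :: "op \<Rightarrow> bool" where
  "trace_class L \<longleftrightarrow> (\<exists>x y. (\<forall>n. x n \<in> l2 \<and> y n \<in> l2) \<and>
      summable (\<lambda>n. l2_norm (x n) * l2_norm (y n)) \<and>
      (\<forall>v\<in>l2. L v = (\<lambda>\<alpha>. \<Sum>n. l2_inner v (x n) * y n \<alpha>)))"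

end

theory Submission
  imports Defs "HOL-Analysis.Analysis"
begin

hide_const (open) Polynomial.coeff


lemma bit_stepA:
  fixes f :: "'a::real_normed_vector \<Rightarrow> 'b::banach"
  assumes "surj f"
  shows "\<exists>n y0 e. e > 0 \<and> ball y0 e \<subseteq> closure (f ` ball 0 (real n))"
proof (rule ccontr)
  assume H: "\<not> ?thesis"
  let ?G = "range (\<lambda>n. closure (f ` ball 0 (real n)))"
  have "euclidean interior_of \<Union>?G = {}"
  proof (rule Baire_category_alt)
    show "completely_metrizable_space (euclidean::'b topology) \<or> locally_compact_space (euclidean::'b topology) \<and> regular_space euclidean"
      using completely_metrizable_space_euclidean by blast
    show "countable ?G" by simp
    fix T assume "T \<in> ?G"
    then obtain n where T: "T = closure (f ` ball 0 (real n))" by auto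
    show "closedin euclidean T \<and> euclidean interior_of T = {}"
    proof
      show "closedin euclidean T" using T by simp
      show "euclidean interior_of T = {}"
      proof (rule ccontr)
        assume "euclidean interior_of T \<noteq> {}"
        then obtain y where y: "y \<in> interior T" by auto
        then obtain e where "e > 0" "ball y e \<subseteq> T" using open_contains_ball_eq open_interior
          by (metis interior_subset subset_trans)
        then show False using H T by blast
      qed
    qed
  qed
  moreover have "UNIV \<subseteq> \<Union>?G"
  proof
    fix y
    obtain x where "y = f x" using assms by (metis surj_def)
    moreover obtain n :: nat where "norm x < n" using reals_Archimedean2 by blast
    ultimately have "y \<in> f ` ball 0 (real n)" by auto
    then have "y \<in> closure (f ` ball 0 (real n))" by (rule subsetD[OF closure_subset])
    then show "y \<in> \<Union>?G" by (rule UnionI[OF rangeI])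
  qed
  then have "\<Union>?G = UNIV" by blast
  ultimately show False by simp
qed

lemma bit_stepB:
  fixes f :: "'a::real_normed_vector \<Rightarrow> 'b::real_normed_vector"
  assumes lin: "bounded_linear f"
  and B: "ball y0 e \<subseteq> closure (f ` ball 0 (real n))" and e: "e > 0"
  shows "\<forall>z. norm z < e \<longrightarrow> (\<forall>d>0. \<exists>a. norm a < 2 * real n \<and> norm (f a - z) < d)"
proof (intro allI impI)
  fix z :: 'b and d :: real
  assume z: "norm z < e" and d: "d > 0"
  have "y0 + z \<in> closure (f ` ball 0 (real n))" using B z by (auto simp: dist_norm)
  then have "\<forall>\<epsilon>>0. \<exists>w\<in>f ` ball 0 (real n). dist w (y0 + z) < \<epsilon>" by (simp only: closure_approachable)
  moreover have "d/2 > 0" using d by simp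
  ultimately obtain w where "w \<in> f ` ball 0 (real n)" "dist w (y0 + z) < d/2" by blast
  then obtain a1 where a1: "a1 \<in> ball 0 (real n)" "dist (f a1) (y0 + z) < d/2" by blast
  have "y0 \<in> ball y0 e" using e by simp
  then have "y0 \<in> closure (f ` ball 0 (real n))" using B by blast
  then have "\<forall>\<epsilon>>0. \<exists>w\<in>f ` ball 0 (real n). dist w y0 < \<epsilon>" by (simp only: closure_approachable)
  moreover have "d/2 > 0" using d by simp
  ultimately obtain w where "w \<in> f ` ball 0 (real n)" "dist w y0 < d/2" by blast
  then obtain a2 where a2: "a2 \<in> ball 0 (real n)" "dist (f a2) y0 < d/2" by blast
  have "norm (a1 - a2) \<le> norm a1 + norm a2" by (rule norm_triangle_ineq4)
  also have "\<dots> < 2 * real n" using a1 a2 by auto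
  finally have 1: "norm (a1 - a2) < 2 * real n" .
  have "f (a1 - a2) - z = (f a1 - (y0 + z)) - (f a2 - y0)"
    using linear_diff[OF bounded_linear.linear[OF lin]] by (simp add: algebra_simps)
  then have "norm (f (a1 - a2) - z) \<le> norm (f a1 - (y0 + z)) + norm (f a2 - y0)"
    by (metis norm_triangle_ineq4)
  also have "\<dots> < d" using a1 a2 by (simp add: dist_norm)
  finally show "\<exists>a. norm a < 2 * real n \<and> norm (f a - z) < d" using 1 by blast
qed

lemma bit_approx:
  fixes f :: "'a::real_normed_vector \<Rightarrow> 'b::real_normed_vector"
  assumes lin: "bounded_linear f"
  and A: "\<forall>z. norm z < e \<longrightarrow> (\<forall>d>0. \<exists>a. norm a < N \<and> norm (f a - z) < d)" and e: "e > 0"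
  shows "\<forall>y d. d > 0 \<longrightarrow> (\<exists>x. norm x \<le> (2 * N / e) * norm y \<and> norm (f x - y) < d)"
proof (intro allI impI)
  fix y :: 'b and d :: real assume d: "d > 0"
  show "\<exists>x. norm x \<le> (2 * N / e) * norm y \<and> norm (f x - y) < d"
  proof (cases "y = 0")
    case True then show ?thesis using d by (intro exI[of _ 0]) (simp add: linear_0[OF bounded_linear.linear[OF lin]])
  next
    case False
    then have ny: "norm y > 0" by simp
    define c where "c = e / (2 * norm y)"
    have c: "c > 0" using ny e by (simp add: c_def)
    have "norm (c *\<^sub>R y) = e / 2" using ny e by (simp add: c_def)
    then have "norm (c *\<^sub>R y) < e" using e by simp
    with A have H: "\<forall>d>0. \<exists>a. norm a < N \<and> norm (f a - c *\<^sub>R y) < d" by blast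
    have "c * d > 0" using c d by simp
    then obtain a where a: "norm a < N" "norm (f a - c *\<^sub>R y) < c * d" using H by blast
    have "f ((1/c) *\<^sub>R a) - y = (1/c) *\<^sub>R (f a - c *\<^sub>R y)"
      using c by (simp add: linear_scale[OF bounded_linear.linear[OF lin]] scaleR_diff_right)
    then have "norm (f ((1/c) *\<^sub>R a) - y) = (1/c) * norm (f a - c *\<^sub>R y)" using c by simp
    also have "\<dots> < (1/c) * (c * d)" using c a by (intro mult_strict_left_mono) auto
    also have "\<dots> = d" using c by simp
    finally have 1: "norm (f ((1/c) *\<^sub>R a) - y) < d" .
    have "norm ((1/c) *\<^sub>R a) = (1/c) * norm a" using c by simp
    also have "\<dots> \<le> (1/c) * N" using c a by (intro mult_left_mono) auto
    also have "\<dots> = (2 * N / e) * norm y" using ny e by (simp add: c_def field_simps)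
    finally show ?thesis using 1 by blast
  qed
qed

lemma bit_iter:
  fixes f :: "'a::banach \<Rightarrow> 'b::real_normed_vector"
  assumes lin: "bounded_linear f"
  and P: "\<forall>y d. d > 0 \<longrightarrow> (\<exists>x. norm x \<le> M * norm y \<and> norm (f x - y) < d)"
  shows "\<exists>x. f x = y \<and> norm x \<le> 2 * M * norm y"
proof (cases "y = 0")
  case True then show ?thesis by (intro exI[of _ 0]) (simp add: linear_0[OF bounded_linear.linear[OF lin]])
next
  case False
  then have ny: "norm y > 0" by simp
  from P obtain pick where pick: "\<And>z d. d > 0 \<Longrightarrow> norm (pick z d) \<le> M * norm z \<and> norm (f (pick z d) - z) < d"
    by metis
  define Y where "Y = rec_nat y (\<lambda>k yk. yk - f (pick yk (norm y / 2 ^ Suc k)))"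
  have Y0: "Y 0 = y" and YS: "\<And>k. Y (Suc k) = Y k - f (pick (Y k) (norm y / 2 ^ Suc k))"
    by (simp_all add: Y_def)
  define X where "X k = pick (Y k) (norm y / 2 ^ Suc k)" for k
  have YS': "Y (Suc k) = Y k - f (X k)" for k by (simp add: YS X_def)
  have nY: "norm (Y k) \<le> norm y / 2 ^ k" for k
  proof (cases k)
    case 0 then show ?thesis by (simp add: Y0)
  next
    case (Suc j)
    have "norm (Y (Suc j)) = norm (f (X j) - Y j)" by (simp add: YS' norm_minus_commute)
    also have "\<dots> < norm y / 2 ^ Suc j" unfolding X_def using pick ny by simp
    finally show ?thesis using Suc by simp
  qed
  have M: "M \<ge> 0"
  proof -
    obtain x where x1: "norm x \<le> M * norm y" and x2: "norm (f x - y) < norm y" using P ny by blast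
    have "f x \<noteq> 0" using x2 by auto
    then have "x \<noteq> 0" using linear_0[OF bounded_linear.linear[OF lin]] by auto
    then have "0 < M * norm y" using x1 by (meson less_le_trans zero_less_norm_iff)
    then show ?thesis using ny by (simp add: zero_less_mult_iff)
  qed
  have nX: "norm (X k) \<le> M * norm y * (1/2) ^ k" for k
  proof -
    have "norm (X k) \<le> M * norm (Y k)" unfolding X_def using pick ny by simp
    also have "\<dots> \<le> M * (norm y / 2 ^ k)" using nY M by (intro mult_left_mono) auto
    finally show ?thesis by (simp add: power_divide)
  qed
  have sg: "summable (\<lambda>k. M * norm y * (1/2::real) ^ k)"
    by (intro summable_mult summable_geometric) simp
  have sn: "summable (\<lambda>k. norm (X k))"
    by (rule summable_comparison_test'[OF sg]) (use nX in simp)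
  have sX: "summable X" using sn by (rule summable_norm_cancel)
  have "norm (suminf X) \<le> (\<Sum>k. norm (X k))" using sn by (rule summable_norm)
  also have "\<dots> \<le> (\<Sum>k. M * norm y * (1/2::real) ^ k)" using sn sg nX by (intro suminf_le) auto
  also have "\<dots> = 2 * M * norm y" using suminf_geometric[of "1/2::real"]
    by (simp add: suminf_mult)
  finally have 1: "norm (suminf X) \<le> 2 * M * norm y" .
  have fs: "f (suminf X) = (\<Sum>k. f (X k))" using bounded_linear.suminf[OF lin sX] by simp
  have ps: "(\<Sum>k<N. f (X k)) = y - Y N" for N
    by (induction N) (simp_all add: Y0 YS' algebra_simps)
  have "(\<lambda>N. norm y / 2 ^ N) \<longlonglongrightarrow> 0"
    by (intro LIMSEQ_divide_realpow_zero) auto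
  then have "Y \<longlonglongrightarrow> 0" by (rule Lim_null_comparison[rotated]) (simp add: nY)
  then have "(\<lambda>N. y - Y N) \<longlonglongrightarrow> y - 0" by (intro tendsto_intros)
  then have "(\<lambda>k. f (X k)) sums y" unfolding sums_def ps by simp
  then have "f (suminf X) = y" using fs sums_unique by metis
  then show ?thesis using 1 by blast
qed

lemma bounded_inverse:
  fixes f :: "'a::banach \<Rightarrow> 'b::banach"
  assumes lin: "bounded_linear f" and "surj f"
  shows "\<exists>M. \<forall>y. \<exists>x. f x = y \<and> norm x \<le> M * norm y"
proof -
  obtain n y0 e where e: "e > 0" and B: "ball y0 e \<subseteq> closure (f ` ball 0 (real n))"
    using bit_stepA[OF assms(2)] by blast
  have A: "\<forall>z. norm z < e \<longrightarrow> (\<forall>d>0. \<exists>a. norm a < 2 * real n \<and> norm (f a - z) < d)"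
    by (rule bit_stepB[OF lin B e])
  have P: "\<forall>y d. d > 0 \<longrightarrow> (\<exists>x. norm x \<le> (2 * (2 * real n) / e) * norm y \<and> norm (f x - y) < d)"
    by (rule bit_approx[OF lin A e])
  show ?thesis using bit_iter[OF lin P] by blast
qed





lemma l2_iff: "x \<in> l2 \<longleftrightarrow> summable (\<lambda>n. (cmod (x n))^2)"
  by (simp add: l2_def)

lemma sq_add_le: "(cmod (a + b))^2 \<le> 2 * (cmod a)^2 + 2 * (cmod b)^2"
proof -
  have "cmod (a + b) \<le> cmod a + cmod b" by (rule norm_triangle_ineq)
  then have "(cmod (a + b))^2 \<le> (cmod a + cmod b)^2" by (intro power_mono) auto
  also have "\<dots> \<le> 2 * (cmod a)^2 + 2 * (cmod b)^2"
    using sum_squares_bound[of "cmod a" "cmod b"] by (simp add: power2_sum)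
  finally show ?thesis .
qed

lemma l2_add: "x \<in> l2 \<Longrightarrow> y \<in> l2 \<Longrightarrow> (\<lambda>n. x n + y n) \<in> l2"
  unfolding l2_iff
  by (rule summable_comparison_test'[where g="\<lambda>n. 2 * (cmod (x n))^2 + 2 * (cmod (y n))^2"])
     (auto intro: summable_add summable_mult sq_add_le)

lemma l2_scale: "x \<in> l2 \<Longrightarrow> (\<lambda>n. c * x n) \<in> l2"
  unfolding l2_iff by (simp add: norm_mult power_mult_distrib summable_mult)

lemma l2_uminus: "x \<in> l2 \<Longrightarrow> (\<lambda>n. - x n) \<in> l2"
  unfolding l2_iff by simp

lemma l2_diff: "x \<in> l2 \<Longrightarrow> y \<in> l2 \<Longrightarrow> (\<lambda>n. x n - y n) \<in> l2"
  using l2_add[of x "\<lambda>n. - y n"] l2_uminus[of y] by simp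

lemma l2_zero: "(\<lambda>_. 0) \<in> l2"
  unfolding l2_iff by simp

lemma l2_finite: "finite N \<Longrightarrow> (\<And>n. n \<notin> N \<Longrightarrow> x n = 0) \<Longrightarrow> x \<in> l2"
  unfolding l2_iff by (rule summable_finite[of N]) auto

lemma l2_basis: "basis_vec b \<in> l2"
  by (rule l2_finite[of "{b}"]) (auto simp: basis_vec_def)

lemma prod_le_sq: "cmod a * cmod b \<le> (cmod a)^2 + (cmod b)^2"
proof -
  have "2 * cmod a * cmod b \<le> (cmod a)^2 + (cmod b)^2" by (rule sum_squares_bound)
  moreover have "0 \<le> cmod a * cmod b" by simp
  ultimately show ?thesis by linarith
qed

lemma l2_prod_summable: "x \<in> l2 \<Longrightarrow> y \<in> l2 \<Longrightarrow> summable (\<lambda>n. cmod (x n) * cmod (y n))"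
  unfolding l2_iff
  by (rule summable_comparison_test'[where g="\<lambda>n. (cmod (x n))^2 + (cmod (y n))^2"])
     (auto intro!: summable_add simp: prod_le_sq)

lemma l2_prod_summable_c: "x \<in> l2 \<Longrightarrow> y \<in> l2 \<Longrightarrow> summable (\<lambda>n. x n * y n)"
  by (rule summable_norm_cancel) (simp add: norm_mult l2_prod_summable)

lemma l2_norm_nonneg: "x \<in> l2 \<Longrightarrow> l2_norm x \<ge> 0"
  unfolding l2_norm_def l2_iff by (rule real_sqrt_ge_zero, rule suminf_nonneg) auto


lemma l2_norm_sq: "x \<in> l2 \<Longrightarrow> (l2_norm x)^2 = (\<Sum>n. (cmod (x n))^2)"
  unfolding l2_norm_def l2_iff by (simp add: suminf_nonneg)

lemma partial_le_l2: "x \<in> l2 \<Longrightarrow> (\<Sum>n\<in>I. (cmod (x n))^2) \<le> (\<Sum>n. (cmod (x n))^2)" if "finite I"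
  using that unfolding l2_iff by (intro sum_le_suminf) auto

lemma cauchy_schwarz_l2:
  assumes "x \<in> l2" "y \<in> l2"
  shows "(\<Sum>n. cmod (x n) * cmod (y n)) \<le> l2_norm x * l2_norm y"
proof (rule suminf_le_const)
  show "summable (\<lambda>n. cmod (x n) * cmod (y n))" using assms by (rule l2_prod_summable)
  fix N
  have "(\<Sum>n<N. cmod (x n) * cmod (y n)) = (\<Sum>n<N. \<bar>cmod (x n)\<bar> * \<bar>cmod (y n)\<bar>)" by simp
  also have "\<dots> \<le> L2_set (\<lambda>n. cmod (x n)) {..<N} * L2_set (\<lambda>n. cmod (y n)) {..<N}"
    by (rule L2_set_mult_ineq)
  also have "\<dots> \<le> l2_norm x * l2_norm y"
  proof (rule mult_mono)
    show "L2_set (\<lambda>n. cmod (x n)) {..<N} \<le> l2_norm x"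
      unfolding L2_set_def l2_norm_def by (rule real_sqrt_le_mono, rule partial_le_l2[OF _ assms(1)]) simp
    show "L2_set (\<lambda>n. cmod (y n)) {..<N} \<le> l2_norm y"
      unfolding L2_set_def l2_norm_def by (rule real_sqrt_le_mono, rule partial_le_l2[OF _ assms(2)]) simp
    show "0 \<le> l2_norm x" by (rule l2_norm_nonneg[OF assms(1)])
    show "0 \<le> L2_set (\<lambda>n. cmod (y n)) {..<N}" by (rule L2_set_nonneg)
  qed
  finally show "(\<Sum>n<N. cmod (x n) * cmod (y n)) \<le> l2_norm x * l2_norm y" .
qed

lemma minkowski_l2:
  assumes x: "x \<in> l2" and y: "y \<in> l2"
  shows "l2_norm (\<lambda>n. x n + y n) \<le> l2_norm x + l2_norm y"
proof -
  have sx: "summable (\<lambda>n. (cmod (x n))^2)" and sy: "summable (\<lambda>n. (cmod (y n))^2)"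
    using x y by (auto simp: l2_iff)
  have sxy: "summable (\<lambda>n. cmod (x n) * cmod (y n))" using x y by (rule l2_prod_summable)
  have sxy2: "summable (\<lambda>n. (cmod (x n + y n))^2)" using l2_add[OF x y] by (simp add: l2_iff)
  have s3: "summable (\<lambda>n. (cmod (x n))^2 + 2 * (cmod (x n) * cmod (y n)) + (cmod (y n))^2)"
    by (intro summable_add summable_mult sx sy sxy)
  have "(l2_norm (\<lambda>n. x n + y n))^2 = (\<Sum>n. (cmod (x n + y n))^2)"
    using l2_norm_sq[OF l2_add[OF x y]] by simp
  also have "\<dots> \<le> (\<Sum>n. (cmod (x n))^2 + 2 * (cmod (x n) * cmod (y n)) + (cmod (y n))^2)"
  proof (rule suminf_le[OF _ sxy2 s3])
    fix n
    have "cmod (x n + y n) \<le> cmod (x n) + cmod (y n)" by (rule norm_triangle_ineq)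
    then have "(cmod (x n + y n))^2 \<le> (cmod (x n) + cmod (y n))^2" by (intro power_mono) auto
    then show "(cmod (x n + y n))^2 \<le> (cmod (x n))^2 + 2 * (cmod (x n) * cmod (y n)) + (cmod (y n))^2"
      by (simp add: power2_sum)
  qed
  also have "\<dots> = (\<Sum>n. (cmod (x n))^2) + 2 * (\<Sum>n. cmod (x n) * cmod (y n)) + (\<Sum>n. (cmod (y n))^2)"
  proof -
    have s2b: "summable (\<lambda>n. 2 * (cmod (x n) * cmod (y n)))" by (intro summable_mult sxy)
    have sab: "summable (\<lambda>n. (cmod (x n))^2 + 2 * (cmod (x n) * cmod (y n)))" by (intro summable_add sx s2b)
    have e1: "(\<Sum>n. (cmod (x n))^2 + 2 * (cmod (x n) * cmod (y n)) + (cmod (y n))^2)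
        = (\<Sum>n. (cmod (x n))^2 + 2 * (cmod (x n) * cmod (y n))) + (\<Sum>n. (cmod (y n))^2)"
      by (rule suminf_add[OF sab sy, symmetric])
    have e2: "(\<Sum>n. (cmod (x n))^2 + 2 * (cmod (x n) * cmod (y n)))
        = (\<Sum>n. (cmod (x n))^2) + (\<Sum>n. 2 * (cmod (x n) * cmod (y n)))"
      by (rule suminf_add[OF sx s2b, symmetric])
    have e3: "(\<Sum>n. 2 * (cmod (x n) * cmod (y n))) = 2 * (\<Sum>n. cmod (x n) * cmod (y n))"
      by (rule suminf_mult[OF sxy])
    show ?thesis unfolding e1 e2 e3 ..
  qed
  also have "\<dots> \<le> (l2_norm x)^2 + 2 * (l2_norm x * l2_norm y) + (l2_norm y)^2"
    using cauchy_schwarz_l2[OF x y] l2_norm_sq[OF x] l2_norm_sq[OF y] by simp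
  also have "\<dots> = (l2_norm x + l2_norm y)^2" by (simp add: power2_sum)
  finally show ?thesis
    by (rule power2_le_imp_le[OF _ add_nonneg_nonneg[OF l2_norm_nonneg[OF x] l2_norm_nonneg[OF y]]])
qed

lemma l2_norm_scale: "x \<in> l2 \<Longrightarrow> l2_norm (\<lambda>n. c * x n) = cmod c * l2_norm x"
proof -
  assume x: "x \<in> l2"
  have "(\<Sum>n. (cmod (c * x n))^2) = (\<Sum>n. (cmod c)^2 * (cmod (x n))^2)"
    by (simp add: norm_mult power_mult_distrib)
  also have "\<dots> = (cmod c)^2 * (\<Sum>n. (cmod (x n))^2)"
    using x unfolding l2_iff by (rule suminf_mult)
  finally show ?thesis unfolding l2_norm_def by (simp add: real_sqrt_mult)
qed

lemma l2_norm_zero_iff: "x \<in> l2 \<Longrightarrow> l2_norm x = 0 \<longleftrightarrow> x = (\<lambda>_. 0)"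
proof -
  assume x: "x \<in> l2"
  have "l2_norm x = 0 \<longleftrightarrow> (\<Sum>n. (cmod (x n))^2) = 0" unfolding l2_norm_def by simp
  also have "\<dots> \<longleftrightarrow> (\<forall>n. (cmod (x n))^2 = 0)" using x unfolding l2_iff by (rule suminf_eq_zero_iff) simp
  also have "\<dots> \<longleftrightarrow> x = (\<lambda>_. 0)" by (simp add: fun_eq_iff)
  finally show ?thesis .
qed

lemma coord_le_l2_norm: "x \<in> l2 \<Longrightarrow> cmod (x n) \<le> l2_norm x"
proof -
  assume x: "x \<in> l2"
  have "(cmod (x n))^2 = (\<Sum>k\<in>{n}. (cmod (x k))^2)" by simp
  also have "\<dots> \<le> (\<Sum>k. (cmod (x k))^2)" using x by (intro partial_le_l2) auto
  also have "\<dots> = (l2_norm x)^2" using l2_norm_sq[OF x] by simp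
  finally show ?thesis by (rule power2_le_imp_le[OF _ l2_norm_nonneg[OF x]])
qed

lemma l2_norm_zero: "l2_norm (\<lambda>_. 0) = 0"
  unfolding l2_norm_def by simp



typedef ell2 = l2 morphisms vec mk
  using l2_zero by blast

setup_lifting type_definition_ell2

instantiation ell2 :: real_normed_vector
begin
lift_definition zero_ell2 :: ell2 is "\<lambda>_. 0" by (rule l2_zero)
lift_definition plus_ell2 :: "ell2 \<Rightarrow> ell2 \<Rightarrow> ell2" is "\<lambda>x y n. x n + y n" by (rule l2_add)
lift_definition minus_ell2 :: "ell2 \<Rightarrow> ell2 \<Rightarrow> ell2" is "\<lambda>x y n. x n - y n" by (rule l2_diff)
lift_definition uminus_ell2 :: "ell2 \<Rightarrow> ell2" is "\<lambda>x n. - x n" by (rule l2_uminus)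
lift_definition scaleR_ell2 :: "real \<Rightarrow> ell2 \<Rightarrow> ell2" is "\<lambda>r x n. of_real r * x n" by (rule l2_scale)
lift_definition norm_ell2 :: "ell2 \<Rightarrow> real" is l2_norm .
definition sgn_ell2 :: "ell2 \<Rightarrow> ell2" where "sgn_ell2 x = scaleR (inverse (norm x)) x"
definition dist_ell2 :: "ell2 \<Rightarrow> ell2 \<Rightarrow> real" where "dist_ell2 x y = norm (x - y)"
definition uniformity_ell2 :: "(ell2 \<times> ell2) filter" where
  "uniformity_ell2 = (INF e\<in>{0<..}. principal {(x, y). dist x y < e})"
definition open_ell2 :: "ell2 set \<Rightarrow> bool" where
  "open_ell2 U = (\<forall>x\<in>U. eventually (\<lambda>(x', y). x' = x \<longrightarrow> y \<in> U) uniformity)"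
instance
proof
  fix a b c :: ell2 and r s :: real
  show "a + b + c = a + (b + c)" by transfer (simp add: add.assoc)
  show "a + b = b + a" by transfer (simp add: add.commute)
  show "0 + a = a" by transfer simp
  show "- a + a = 0" by transfer simp
  show "a - b = a + - b" by transfer simp
  show "r *\<^sub>R (a + b) = r *\<^sub>R a + r *\<^sub>R b" by transfer (simp add: distrib_left)
  show "(r + s) *\<^sub>R a = r *\<^sub>R a + s *\<^sub>R a" by transfer (simp add: distrib_right)
  show "r *\<^sub>R s *\<^sub>R a = (r * s) *\<^sub>R a" by transfer (simp add: mult.assoc)
  show "1 *\<^sub>R a = a" by transfer simp
  show "norm a = 0 \<longleftrightarrow> a = 0" by transfer (rule l2_norm_zero_iff)
  show "norm (a + b) \<le> norm a + norm b" by transfer (rule minkowski_l2)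
  show "norm (r *\<^sub>R a) = \<bar>r\<bar> * norm a" by transfer (simp add: l2_norm_scale)
qed (simp_all add: uniformity_ell2_def open_ell2_def sgn_ell2_def dist_ell2_def)
end


lemma vec_l2[simp]: "vec x \<in> l2" using vec by blast
lemmas vec_ops[simp] = zero_ell2.rep_eq plus_ell2.rep_eq minus_ell2.rep_eq uminus_ell2.rep_eq scaleR_ell2.rep_eq
lemma norm_vec: "norm x = l2_norm (vec x)" by (simp add: norm_ell2.rep_eq)

lemma coord_le_norm: "cmod (vec x n) \<le> norm x"
  unfolding norm_vec by (rule coord_le_l2_norm) simp

lemma sumsq_le_norm: "(\<Sum>n\<in>I. (cmod (vec x n))^2) \<le> (norm x)^2" if "finite I"
  unfolding norm_vec l2_norm_sq[OF vec_l2] using that by (intro partial_le_l2) auto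

instance ell2 :: banach
proof
  fix X :: "nat \<Rightarrow> ell2" assume C: "Cauchy X"
  have Cn: "Cauchy (\<lambda>m. vec (X m) n)" for n
  proof (rule metric_CauchyI)
    fix e :: real assume "e > 0"
    then obtain M where M: "\<forall>m\<ge>M. \<forall>k\<ge>M. dist (X m) (X k) < e" using metric_CauchyD[OF C] by blast
    show "\<exists>M. \<forall>m\<ge>M. \<forall>k\<ge>M. dist (vec (X m) n) (vec (X k) n) < e"
    proof (intro exI allI impI)
      fix m k assume "M \<le> m" "M \<le> k"
      then have "norm (X m - X k) < e" using M by (simp add: dist_norm)
      moreover have "cmod (vec (X m - X k) n) \<le> norm (X m - X k)" by (rule coord_le_norm)
      ultimately show "dist (vec (X m) n) (vec (X k) n) < e" by (simp add: dist_norm)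
    qed
  qed
  define x where "x n = lim (\<lambda>m. vec (X m) n)" for n
  have xl: "(\<lambda>m. vec (X m) n) \<longlonglongrightarrow> x n" for n
    unfolding x_def using Cn[of n] by (simp add: Cauchy_convergent_iff convergent_LIMSEQ_iff)
  have key: "\<exists>M. \<forall>m\<ge>M. (\<lambda>n. vec (X m) n - x n) \<in> l2 \<and> l2_norm (\<lambda>n. vec (X m) n - x n) \<le> e"
    if e: "e > 0" for e
  proof -
    obtain M where M: "\<forall>m\<ge>M. \<forall>k\<ge>M. dist (X m) (X k) < e" using metric_CauchyD[OF C e] by blast
    show ?thesis
    proof (intro exI allI impI)
      fix m assume m: "M \<le> m"
      have bnd: "(\<Sum>n<N. (cmod (vec (X m) n - x n))^2) \<le> e^2" for N
      proof -
        have lim: "(\<lambda>k. \<Sum>n<N. (cmod (vec (X m) n - vec (X k) n))^2) \<longlonglongrightarrow> (\<Sum>n<N. (cmod (vec (X m) n - x n))^2)"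
          by (intro tendsto_intros xl)
        have "\<forall>k\<ge>M. (\<Sum>n<N. (cmod (vec (X m) n - vec (X k) n))^2) \<le> e^2"
        proof (intro allI impI)
          fix k assume k: "M \<le> k"
          have "(\<Sum>n<N. (cmod (vec (X m) n - vec (X k) n))^2) = (\<Sum>n<N. (cmod (vec (X m - X k) n))^2)" by simp
          also have "\<dots> \<le> (norm (X m - X k))^2" by (rule sumsq_le_norm) simp
          also have "\<dots> \<le> e^2" using M m k by (intro power_mono) (auto simp: dist_norm less_imp_le)
          finally show "(\<Sum>n<N. (cmod (vec (X m) n - vec (X k) n))^2) \<le> e^2" .
        qed
        then show ?thesis using lim by (intro LIMSEQ_le_const2[OF lim]) auto
      qed
      have s: "summable (\<lambda>n. (cmod (vec (X m) n - x n))^2)"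
        by (rule summableI_nonneg_bounded[OF _ bnd]) simp
      then have l: "(\<lambda>n. vec (X m) n - x n) \<in> l2" by (simp add: l2_iff)
      have "(\<Sum>n. (cmod (vec (X m) n - x n))^2) \<le> e^2" by (rule suminf_le_const[OF s bnd])
      then have "l2_norm (\<lambda>n. vec (X m) n - x n) \<le> sqrt (e^2)" unfolding l2_norm_def by (rule real_sqrt_le_mono)
      then show "(\<lambda>n. vec (X m) n - x n) \<in> l2 \<and> l2_norm (\<lambda>n. vec (X m) n - x n) \<le> e" using l e by simp
    qed
  qed
  obtain M1 where "(\<lambda>n. vec (X M1) n - x n) \<in> l2" using key[of 1] by auto
  then have "(\<lambda>n. vec (X M1) n - (vec (X M1) n - x n)) \<in> l2" by (rule l2_diff[OF vec_l2])
  moreover have "(\<lambda>n. vec (X M1) n - (vec (X M1) n - x n)) = x" by (simp add: fun_eq_iff)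
  ultimately have xl2: "x \<in> l2" by simp
  have "X \<longlonglongrightarrow> mk x"
  proof (rule LIMSEQ_I)
    fix r :: real assume r: "r > 0"
    obtain M where M: "\<forall>m\<ge>M. (\<lambda>n. vec (X m) n - x n) \<in> l2 \<and> l2_norm (\<lambda>n. vec (X m) n - x n) \<le> r/2"
      using key[of "r/2"] r by auto
    show "\<exists>M. \<forall>m\<ge>M. norm (X m - mk x) < r"
    proof (intro exI allI impI)
      fix m assume "M \<le> m"
      then have "l2_norm (\<lambda>n. vec (X m) n - x n) \<le> r/2" using M by blast
      moreover have "norm (X m - mk x) = l2_norm (\<lambda>n. vec (X m) n - x n)"
        unfolding norm_vec using xl2 by (simp add: mk_inverse)
      ultimately show "norm (X m - mk x) < r" using r by simp
    qed
  qed
  then show "convergent X" by (rule convergentI)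
qed



lemma bop_l2: "bounded_op L \<Longrightarrow> x \<in> l2 \<Longrightarrow> L x \<in> l2"
  unfolding bounded_op_def by blast

lemma bop_lin: "bounded_op L \<Longrightarrow> x \<in> l2 \<Longrightarrow> y \<in> l2 \<Longrightarrow>
    L (\<lambda>n. a * x n + b * y n) = (\<lambda>n. a * L x n + b * L y n)"
  unfolding bounded_op_def by blast

lemma bop_add: "bounded_op L \<Longrightarrow> x \<in> l2 \<Longrightarrow> y \<in> l2 \<Longrightarrow>
    L (\<lambda>n. x n + y n) = (\<lambda>n. L x n + L y n)"
  using bop_lin[of L x y 1 1] by simp

lemma bop_scale: "bounded_op L \<Longrightarrow> x \<in> l2 \<Longrightarrow> L (\<lambda>n. c * x n) = (\<lambda>n. c * L x n)"
  using bop_lin[of L x "\<lambda>_. 0" c 0] l2_zero by simp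

lemma bop_zero: "bounded_op L \<Longrightarrow> L (\<lambda>_. 0) = (\<lambda>_. 0)"
  using bop_scale[of L "\<lambda>_. 0" 0] l2_zero by simp

lemma bop_uminus: "bounded_op L \<Longrightarrow> x \<in> l2 \<Longrightarrow> L (\<lambda>n. - x n) = (\<lambda>n. - L x n)"
  using bop_scale[of L x "-1"] by simp

lemma bop_diff: "bounded_op L \<Longrightarrow> x \<in> l2 \<Longrightarrow> y \<in> l2 \<Longrightarrow>
    L (\<lambda>n. x n - y n) = (\<lambda>n. L x n - L y n)"
  using bop_lin[of L x y 1 "-1"] by simp

lemma bop_bound: "bounded_op L \<Longrightarrow> \<exists>K\<ge>0. \<forall>x\<in>l2. l2_norm (L x) \<le> K * l2_norm x"
proof -
  assume "bounded_op L"
  then obtain K where K: "\<forall>x\<in>l2. l2_norm (L x) \<le> K * l2_norm x" unfolding bounded_op_def by blast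
  have "\<forall>x\<in>l2. l2_norm (L x) \<le> max K 0 * l2_norm x"
  proof
    fix x assume x: "x \<in> l2"
    have "K * l2_norm x \<le> max K 0 * l2_norm x" using l2_norm_nonneg[OF x] by (intro mult_right_mono) auto
    then show "l2_norm (L x) \<le> max K 0 * l2_norm x" using K x by auto
  qed
  then show ?thesis by (intro exI[of _ "max K 0"]) auto
qed

definition lift :: "op \<Rightarrow> ell2 \<Rightarrow> ell2" where "lift L x = mk (L (vec x))"

lemma vec_lift: "bounded_op L \<Longrightarrow> vec (lift L x) = L (vec x)"
  unfolding lift_def by (simp add: mk_inverse bop_l2)

lemma vec_mk: "x \<in> l2 \<Longrightarrow> vec (mk x) = x" by (simp add: mk_inverse)

lemma lift_bl: assumes L: "bounded_op L" shows "bounded_linear (lift L)"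
proof -
  obtain K where K: "K \<ge> 0" "\<forall>x\<in>l2. l2_norm (L x) \<le> K * l2_norm x" using bop_bound[OF L] by blast
  show ?thesis
  proof (rule bounded_linear_intro[where K=K])
    fix x y :: ell2 and r :: real
    show "lift L (x + y) = lift L x + lift L y"
      by (rule vec_inject[THEN iffD1]) (simp add: vec_lift[OF L] bop_add[OF L])
    show "lift L (r *\<^sub>R x) = r *\<^sub>R lift L x"
      by (rule vec_inject[THEN iffD1]) (simp add: vec_lift[OF L] bop_scale[OF L])
    show "norm (lift L x) \<le> norm x * K"
      unfolding norm_vec vec_lift[OF L] using K by (simp add: mult.commute)
  qed
qed

lemma coord_bl: "bounded_linear (\<lambda>x::ell2. vec x b)"
proof (rule bounded_linear_intro[where K=1])
  fix x y :: ell2 and r :: real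
  show "vec (x + y) b = vec x b + vec y b" by simp
  show "vec (r *\<^sub>R x) b = r *\<^sub>R vec x b" by (simp add: scaleR_conv_of_real)
  show "norm (vec x b) \<le> norm x * 1" using coord_le_norm by simp
qed

section \<open>pairing\<close>

definition pair :: "seq \<Rightarrow> seq \<Rightarrow> complex" where "pair x y = (\<Sum>a. x a * y a)"

lemma pair_bound: assumes "x \<in> l2" "y \<in> l2" shows "cmod (pair x y) \<le> l2_norm x * l2_norm y"
proof -
  have "cmod (pair x y) \<le> (\<Sum>a. norm (x a * y a))"
    unfolding pair_def by (rule summable_norm) (simp add: norm_mult l2_prod_summable assms)
  also have "\<dots> \<le> l2_norm x * l2_norm y" using cauchy_schwarz_l2[OF assms] by (simp add: norm_mult)
  finally show ?thesis .
qed

lemma pair_comm: "pair x y = pair y x" unfolding pair_def by (simp add: mult.commute)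

lemma pair_add_right: "x \<in> l2 \<Longrightarrow> y \<in> l2 \<Longrightarrow> z \<in> l2 \<Longrightarrow> pair x (\<lambda>n. y n + z n) = pair x y + pair x z"
  unfolding pair_def by (simp add: distrib_left suminf_add[symmetric] l2_prod_summable_c)

lemma pair_diff_right: "x \<in> l2 \<Longrightarrow> y \<in> l2 \<Longrightarrow> z \<in> l2 \<Longrightarrow> pair x (\<lambda>n. y n - z n) = pair x y - pair x z"
  unfolding pair_def by (simp add: right_diff_distrib suminf_diff[symmetric] l2_prod_summable_c)

lemma pair_scale_right: "x \<in> l2 \<Longrightarrow> y \<in> l2 \<Longrightarrow> pair x (\<lambda>n. c * y n) = c * pair x y"
proof -
  assume "x \<in> l2" "y \<in> l2"
  then have "summable (\<lambda>n. x n * y n)" by (rule l2_prod_summable_c)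
  then show ?thesis unfolding pair_def using suminf_mult[of "\<lambda>n. x n * y n" c]
    by (simp add: algebra_simps)
qed

lemma pair_add_left: "x \<in> l2 \<Longrightarrow> y \<in> l2 \<Longrightarrow> z \<in> l2 \<Longrightarrow> pair (\<lambda>n. y n + z n) x = pair y x + pair z x"
  using pair_add_right[of x y z] by (simp add: pair_comm)

lemma pair_basis_left: "pair (basis_vec b) q = q b"
  unfolding pair_def by (subst suminf_finite[of "{b}"]) (auto simp: basis_vec_def)

lemma pair_basis_right: "pair q (basis_vec b) = q b"
  using pair_basis_left by (simp add: pair_comm)

lemma pair_zero_left: "pair (\<lambda>_. 0) q = 0"
  unfolding pair_def by simp

section \<open>truncation\<close>

definition trunc :: "nat \<Rightarrow> seq \<Rightarrow> seq" where "trunc N y = (\<lambda>n. if n < N then y n else 0)"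

lemma trunc_l2: "trunc N y \<in> l2"
  unfolding trunc_def by (rule l2_finite[of "{..<N}"]) auto

lemma trunc_Suc: "trunc (Suc N) y = (\<lambda>n. 1 * trunc N y n + y N * basis_vec N n)"
  unfolding trunc_def basis_vec_def by (auto simp: fun_eq_iff less_Suc_eq)

lemma tail_norm: assumes y: "y \<in> l2"
  shows "(\<lambda>N. l2_norm (\<lambda>n. y n - trunc N y n)) \<longlonglongrightarrow> 0"
proof -
  define f where "f n = (cmod (y n))^2" for n
  have sf: "summable f" unfolding f_def using y by (simp add: l2_iff)
  have eq: "(\<Sum>n. (cmod (y n - trunc N y n))^2) = suminf f - (\<Sum>n<N. f n)" for N
  proof -
    have "(\<lambda>n. (cmod (y n - trunc N y n))^2) = (\<lambda>n. f n - (if n < N then f n else 0))"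
      by (auto simp: fun_eq_iff trunc_def f_def)
    moreover have sg: "summable (\<lambda>n. if n < N then f n else 0)"
      by (rule summable_finite[of "{..<N}"]) auto
    moreover have "(\<Sum>n. if n < N then f n else 0) = (\<Sum>n<N. f n)"
      by (subst suminf_finite[of "{..<N}"]) auto
    ultimately show ?thesis using suminf_diff[OF sf sg] by simp
  qed
  have "(\<lambda>N. suminf f - (\<Sum>n<N. f n)) \<longlonglongrightarrow> suminf f - suminf f"
    by (intro tendsto_intros summable_LIMSEQ sf)
  then have "(\<lambda>N. sqrt (suminf f - (\<Sum>n<N. f n))) \<longlonglongrightarrow> sqrt 0"
    by (intro tendsto_real_sqrt) simp
  then show ?thesis unfolding l2_norm_def eq by simp
qed

lemma bop_trunc: assumes L: "bounded_op L"
  shows "L (trunc N y) = (\<lambda>n. \<Sum>a<N. y a * L (basis_vec a) n)"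
proof (induction N)
  case 0
  have "trunc 0 y = (\<lambda>_. 0)" by (simp add: trunc_def)
  then show ?case by (simp add: bop_zero[OF L])
next
  case (Suc N)
  show ?case unfolding trunc_Suc
    by (subst bop_lin[OF L trunc_l2 l2_basis]) (simp add: Suc)
qed

lemma pair_op_limit:
  assumes L: "bounded_op L" and y: "y \<in> l2" and q: "q \<in> l2"
  shows "(\<lambda>N. \<Sum>b<N. q b * pair y (L (basis_vec b))) \<longlonglongrightarrow> pair y (L q)"
proof -
  obtain K where K: "K \<ge> 0" "\<forall>x\<in>l2. l2_norm (L x) \<le> K * l2_norm x" using bop_bound[OF L] by blast
  have eqN: "pair y (L (trunc N q)) = (\<Sum>b<N. q b * pair y (L (basis_vec b)))" for N
  proof (induction N)
    case 0
    have "trunc 0 q = (\<lambda>_. 0)" by (simp add: trunc_def)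
    then show ?case by (simp add: bop_zero[OF L] pair_def)
  next
    case (Suc N)
    have "L (trunc (Suc N) q) = (\<lambda>n. L (trunc N q) n + q N * L (basis_vec N) n)"
      unfolding trunc_Suc by (subst bop_lin[OF L trunc_l2 l2_basis]) simp
    then have "pair y (L (trunc (Suc N) q)) = pair y (L (trunc N q)) + q N * pair y (L (basis_vec N))"
      by (simp add: pair_add_right y bop_l2[OF L] trunc_l2 l2_basis l2_scale pair_scale_right)
    then show ?case using Suc by simp
  qed
  have d: "pair y (L q) - pair y (L (trunc N q)) = pair y (L (\<lambda>n. q n - trunc N q n))" for N
    unfolding bop_diff[OF L q trunc_l2] by (rule pair_diff_right[OF y bop_l2[OF L q] bop_l2[OF L trunc_l2], symmetric])
  have bnd: "cmod (pair y (L q) - pair y (L (trunc N q))) \<le> l2_norm y * (K * l2_norm (\<lambda>n. q n - trunc N q n))" for N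
  proof -
    have dl: "(\<lambda>n. q n - trunc N q n) \<in> l2" by (rule l2_diff[OF q trunc_l2])
    have "cmod (pair y (L (\<lambda>n. q n - trunc N q n))) \<le> l2_norm y * l2_norm (L (\<lambda>n. q n - trunc N q n))"
      by (rule pair_bound[OF y bop_l2[OF L dl]])
    also have "\<dots> \<le> l2_norm y * (K * l2_norm (\<lambda>n. q n - trunc N q n))"
      using K dl l2_norm_nonneg[OF y] by (intro mult_left_mono) auto
    finally show ?thesis unfolding d .
  qed
  have "(\<lambda>N. l2_norm y * (K * l2_norm (\<lambda>n. q n - trunc N q n))) \<longlonglongrightarrow> l2_norm y * (K * 0)"
    by (intro tendsto_mult tendsto_const tail_norm[OF q])
  then have g0: "(\<lambda>N. l2_norm y * (K * l2_norm (\<lambda>n. q n - trunc N q n))) \<longlonglongrightarrow> 0" by simp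
  have "(\<lambda>N. pair y (L q) - pair y (L (trunc N q))) \<longlonglongrightarrow> 0"
    by (rule Lim_null_comparison[OF _ g0]) (intro always_eventually allI, simp add: bnd)
  then have "(\<lambda>N. pair y (L q) - (pair y (L q) - pair y (L (trunc N q)))) \<longlonglongrightarrow> pair y (L q) - 0"
    by (intro tendsto_intros)
  then show ?thesis by (simp add: eqN)
qed

lemma op_coord:
  assumes L: "bounded_op L" and q: "q \<in> l2"
  shows "(\<lambda>N. \<Sum>a<N. q a * coeff L b a) \<longlonglongrightarrow> L q b"
  using pair_op_limit[OF L l2_basis q, of b] by (simp add: pair_basis_left coeff_def)

lemma pair_sym_op:
  assumes L: "bounded_op L" and sym: "\<forall>\<alpha> \<beta>. coeff L \<alpha> \<beta> = coeff L \<beta> \<alpha>"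
    and y: "y \<in> l2" and q: "q \<in> l2"
  shows "pair y (L q) = pair q (L y)"
proof -
  have e: "pair y (L (basis_vec b)) = L y b" for b
  proof -
    have "summable (\<lambda>a. y a * L (basis_vec b) a)" by (rule l2_prod_summable_c[OF y bop_l2[OF L l2_basis]])
    then have "(\<lambda>N. \<Sum>a<N. y a * L (basis_vec b) a) \<longlonglongrightarrow> pair y (L (basis_vec b))"
      unfolding pair_def by (rule summable_LIMSEQ)
    moreover have "(\<lambda>N. \<Sum>a<N. y a * L (basis_vec b) a) \<longlonglongrightarrow> L y b"
      using op_coord[OF L y, of b] sym by (simp add: coeff_def)
    ultimately show ?thesis by (rule LIMSEQ_unique)
  qed
  have "(\<lambda>N. \<Sum>b<N. q b * L y b) \<longlonglongrightarrow> pair y (L q)"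
    using pair_op_limit[OF L y q] by (simp add: e)
  moreover have "(\<lambda>N. \<Sum>b<N. q b * L y b) \<longlonglongrightarrow> pair q (L y)"
    unfolding pair_def by (rule summable_LIMSEQ, rule l2_prod_summable_c[OF q bop_l2[OF L y]])
  ultimately show ?thesis by (rule LIMSEQ_unique)
qed



lemma omega_pair: "omega v w = pair (fst v) (snd w) - pair (snd v) (fst w)"
  by (simp add: omega_def pair_def)

lemma ctaud_bop:
  assumes C: "bounded_op C" and D: "bounded_op D" and t: "bounded_op \<tau>"
  shows "bounded_op (CtauD C D \<tau>)"
proof -
  obtain KC where KC: "KC \<ge> 0" "\<forall>x\<in>l2. l2_norm (C x) \<le> KC * l2_norm x" using bop_bound[OF C] by blast
  obtain KD where KD: "KD \<ge> 0" "\<forall>x\<in>l2. l2_norm (D x) \<le> KD * l2_norm x" using bop_bound[OF D] by blast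
  obtain Kt where Kt: "Kt \<ge> 0" "\<forall>x\<in>l2. l2_norm (\<tau> x) \<le> Kt * l2_norm x" using bop_bound[OF t] by blast
  show ?thesis unfolding bounded_op_def
  proof (intro conjI ballI allI)
    fix x assume x: "x \<in> l2"
    show "CtauD C D \<tau> x \<in> l2" unfolding CtauD_def
      by (intro l2_add bop_l2[OF C] bop_l2[OF D] bop_l2[OF t] x)
  next
    fix x y a b assume x: "x \<in> l2" and y: "y \<in> l2"
    have e: "C (\<lambda>n. a * \<tau> x n + b * \<tau> y n) = (\<lambda>n. a * C (\<tau> x) n + b * C (\<tau> y) n)"
      by (rule bop_lin[OF C bop_l2[OF t x] bop_l2[OF t y]])
    show "CtauD C D \<tau> (\<lambda>n. a * x n + b * y n) = (\<lambda>n. a * CtauD C D \<tau> x n + b * CtauD C D \<tau> y n)"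
      unfolding CtauD_def bop_lin[OF t x y] bop_lin[OF D x y] e by (rule ext) (simp add: ring_distribs)
  next
    show "\<exists>K. \<forall>x\<in>l2. l2_norm (CtauD C D \<tau> x) \<le> K * l2_norm x"
    proof (intro exI ballI)
      fix x assume x: "x \<in> l2"
      have "l2_norm (CtauD C D \<tau> x) \<le> l2_norm (C (\<tau> x)) + l2_norm (D x)"
        unfolding CtauD_def by (rule minkowski_l2[OF bop_l2[OF C bop_l2[OF t x]] bop_l2[OF D x]])
      also have "\<dots> \<le> KC * (Kt * l2_norm x) + KD * l2_norm x"
      proof (rule add_mono)
        have "l2_norm (C (\<tau> x)) \<le> KC * l2_norm (\<tau> x)" using KC bop_l2[OF t x] by blast
        also have "\<dots> \<le> KC * (Kt * l2_norm x)" using KC Kt x by (intro mult_left_mono) auto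
        finally show "l2_norm (C (\<tau> x)) \<le> KC * (Kt * l2_norm x)" .
        show "l2_norm (D x) \<le> KD * l2_norm x" using KD x by blast
      qed
      also have "\<dots> = (KC * Kt + KD) * l2_norm x" by (simp add: algebra_simps)
      finally show "l2_norm (CtauD C D \<tau> x) \<le> (KC * Kt + KD) * l2_norm x" .
    qed
  qed
qed

lemma bop_inverse:
  assumes G: "bounded_op G" and bij: "bij_betw G l2 l2"
  shows "bounded_op (the_inv_into l2 G)"
proof -
  have inj: "inj_on G l2" and img: "G ` l2 = l2" using bij by (auto simp: bij_betw_def)
  have surj: "surj (lift G)"
  proof -
    have "p \<in> range (lift G)" for p
    proof -
      have "vec p \<in> G ` l2" using img by simp
      then obtain q where q: "vec p = G q" "q \<in> l2" by (rule imageE)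
      have "lift G (mk q) = p" unfolding lift_def vec_mk[OF q(2)] q(1)[symmetric] by (rule vec_inverse)
      then show ?thesis by (metis rangeI)
    qed
    then show ?thesis by blast
  qed
  obtain M where M: "\<forall>y. \<exists>x. lift G x = y \<and> norm x \<le> M * norm y"
    using bounded_inverse[OF lift_bl[OF G] surj] by blast
  let ?Gi = "the_inv_into l2 G"
  have Gi_l2: "?Gi p \<in> l2" if "p \<in> l2" for p
    by (rule the_inv_into_into[OF inj]) (use that img in auto)
  have GGi: "G (?Gi p) = p" if "p \<in> l2" for p
    by (rule f_the_inv_into_f[OF inj]) (use that img in auto)
  show ?thesis unfolding bounded_op_def
  proof (intro conjI ballI allI)
    fix x assume "x \<in> l2" then show "?Gi x \<in> l2" by (rule Gi_l2)
  next
    fix x y a b assume x: "x \<in> l2" and y: "y \<in> l2"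
    have u: "(\<lambda>n. a * ?Gi x n + b * ?Gi y n) \<in> l2" by (intro l2_add l2_scale Gi_l2 x y)
    have "G (\<lambda>n. a * ?Gi x n + b * ?Gi y n) = (\<lambda>n. a * x n + b * y n)"
      by (simp add: bop_lin[OF G Gi_l2[OF x] Gi_l2[OF y]] GGi x y)
    then show "?Gi (\<lambda>n. a * x n + b * y n) = (\<lambda>n. a * ?Gi x n + b * ?Gi y n)"
      by (intro the_inv_into_f_eq[OF inj] u)
  next
    show "\<exists>K. \<forall>x\<in>l2. l2_norm (?Gi x) \<le> K * l2_norm x"
    proof (intro exI ballI)
      fix p assume p: "p \<in> l2"
      obtain x where x: "lift G x = mk p" "norm x \<le> M * norm (mk p)" using M by blast
      have "G (vec x) = p" using arg_cong[OF x(1), of vec] by (simp add: vec_lift[OF G] vec_mk p)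
      then have "?Gi p = vec x" by (intro the_inv_into_f_eq[OF inj]) auto
      then show "l2_norm (?Gi p) \<le> M * l2_norm p" using x(2) by (simp add: norm_vec vec_mk p)
    qed
  qed
qed

lemma l2_inner_pair: "l2_inner v x = pair v (\<lambda>n. cnj (x n))"
  by (simp add: l2_inner_def pair_def)

lemma l2_cnj: "x \<in> l2 \<Longrightarrow> (\<lambda>n. cnj (x n)) \<in> l2" by (simp add: l2_iff)
lemma l2_norm_cnj: "l2_norm (\<lambda>n. cnj (x n)) = l2_norm x" by (simp add: l2_norm_def)

lemma l2_inner_bound: "v \<in> l2 \<Longrightarrow> x \<in> l2 \<Longrightarrow> cmod (l2_inner v x) \<le> l2_norm v * l2_norm x"
  unfolding l2_inner_pair using pair_bound[OF _ l2_cnj, of v x] by (simp add: l2_norm_cnj)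

lemma trace_transfer:
  assumes Gi: "bounded_op Gi" and tc: "trace_class C"
  shows "trace_class (\<lambda>v \<alpha>. - Gi (C v) \<alpha>)"
proof -
  obtain x y where xy: "\<forall>n. x n \<in> l2 \<and> y n \<in> l2"
    and sxy: "summable (\<lambda>n. l2_norm (x n) * l2_norm (y n))"
    and Cv: "\<forall>v\<in>l2. C v = (\<lambda>\<alpha>. \<Sum>n. l2_inner v (x n) * y n \<alpha>)"
    using tc unfolding trace_class_def by blast
  obtain M where M: "M \<ge> 0" "\<forall>p\<in>l2. l2_norm (Gi p) \<le> M * l2_norm p" using bop_bound[OF Gi] by blast
  define z where "z n = (\<lambda>\<alpha>. - Gi (y n) \<alpha>)" for n
  have zl: "z n \<in> l2" for n unfolding z_def by (intro l2_uminus bop_l2[OF Gi]) (use xy in blast)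
  have nz: "l2_norm (z n) \<le> M * l2_norm (y n)" for n
  proof -
    have "l2_norm (z n) = l2_norm (\<lambda>\<alpha>. (-1) * Gi (y n) \<alpha>)" by (simp add: z_def)
    also have "\<dots> = l2_norm (Gi (y n))" using l2_norm_scale[OF bop_l2[OF Gi], of "y n" "-1"] xy by simp
    also have "\<dots> \<le> M * l2_norm (y n)" using M xy by blast
    finally show ?thesis .
  qed
  have sxz: "summable (\<lambda>n. l2_norm (x n) * l2_norm (z n))"
  proof (rule summable_comparison_test'[where g="\<lambda>n. M * (l2_norm (x n) * l2_norm (y n))"])
    show "summable (\<lambda>n. M * (l2_norm (x n) * l2_norm (y n)))" by (rule summable_mult[OF sxy])
    fix n
    have "l2_norm (x n) * l2_norm (z n) \<le> l2_norm (x n) * (M * l2_norm (y n))"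
      using nz xy l2_norm_nonneg by (intro mult_left_mono) auto
    moreover have "0 \<le> l2_norm (x n) * l2_norm (z n)" using xy zl l2_norm_nonneg by simp
    ultimately show "norm (l2_norm (x n) * l2_norm (z n)) \<le> M * (l2_norm (x n) * l2_norm (y n))"
      by (simp add: algebra_simps)
  qed
  have rep: "(\<lambda>\<alpha>. - Gi (C v) \<alpha>) = (\<lambda>\<alpha>. \<Sum>n. l2_inner v (x n) * z n \<alpha>)" if v: "v \<in> l2" for v
  proof -
    define c where "c n = l2_inner v (x n)" for n
    define w where "w n = mk (\<lambda>\<alpha>. c n * y n \<alpha>)" for n
    have vw: "vec (w n) = (\<lambda>\<alpha>. c n * y n \<alpha>)" for n unfolding w_def by (intro vec_mk l2_scale) (use xy in blast)
    have nw: "norm (w n) \<le> l2_norm v * (l2_norm (x n) * l2_norm (y n))" for n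
    proof -
      have "norm (w n) = cmod (c n) * l2_norm (y n)" unfolding norm_vec vw using l2_norm_scale xy by blast
      also have "\<dots> \<le> (l2_norm v * l2_norm (x n)) * l2_norm (y n)"
        unfolding c_def using l2_inner_bound[OF v] xy l2_norm_nonneg by (intro mult_right_mono) auto
      finally show ?thesis by (simp add: mult.assoc)
    qed
    have "summable (\<lambda>n. norm (w n))"
      by (rule summable_comparison_test'[OF summable_mult[OF sxy, of "l2_norm v"]]) (simp add: nw)
    then have sw: "summable w" by (rule summable_norm_cancel)
    have vS: "vec (suminf w) = C v"
    proof
      fix \<alpha>
      have "vec (suminf w) \<alpha> = (\<Sum>n. vec (w n) \<alpha>)" by (rule bounded_linear.suminf[OF coord_bl sw])
      then show "vec (suminf w) \<alpha> = C v \<alpha>" using Cv v by (simp add: vw c_def)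
    qed
    have sGw: "summable (\<lambda>n. lift Gi (w n))" by (rule bounded_linear.summable[OF lift_bl[OF Gi] sw])
    have e0: "Gi (C v) = vec (\<Sum>n. lift Gi (w n))"
      using bounded_linear.suminf[OF lift_bl[OF Gi] sw] vec_lift[OF Gi, of "suminf w"] vS by simp
    have e: "Gi (C v) \<alpha> = (\<Sum>n. vec (lift Gi (w n)) \<alpha>)" for \<alpha>
      unfolding e0 using bounded_linear.suminf[OF coord_bl sGw, of \<alpha>] by simp
    have s\<alpha>: "summable (\<lambda>n. vec (lift Gi (w n)) \<alpha>)" for \<alpha>
      by (rule bounded_linear.summable[OF coord_bl sGw])
    have vG: "vec (lift Gi (w n)) \<alpha> = c n * Gi (y n) \<alpha>" for n \<alpha>
      unfolding vec_lift[OF Gi] vw using bop_scale[OF Gi, of "y n" "c n"] xy by simp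
    show ?thesis
    proof
      fix \<alpha>
      have "- Gi (C v) \<alpha> = - (\<Sum>n. c n * Gi (y n) \<alpha>)" using e[of \<alpha>] by (simp add: vG)
      also have "\<dots> = (\<Sum>n. - (c n * Gi (y n) \<alpha>))" using s\<alpha>[of \<alpha>] by (simp add: vG suminf_minus)
      also have "\<dots> = (\<Sum>n. l2_inner v (x n) * z n \<alpha>)" by (simp add: c_def z_def)
      finally show "- Gi (C v) \<alpha> = (\<Sum>n. l2_inner v (x n) * z n \<alpha>)" .
    qed
  qed
  show ?thesis unfolding trace_class_def
    by (intro exI[of _ x] exI[of _ z] conjI sxz ballI rep) (use xy zl in auto)
qed




theorem lemma5:
  fixes A B C D \<tau> :: op
  assumes "bounded_op A" and "bounded_op B" and "bounded_op C" and "bounded_op D"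
    and "symplectic_aut (blockop A B C D)"
    and "bounded_op \<tau>"
    and "\<forall>\<alpha> \<beta>. coeff \<tau> \<alpha> \<beta> = coeff \<tau> \<beta> \<alpha>"
    and "direct_sum_H (blockop A B C D ` lagr_T \<tau>) Hminus"
  shows "bounded_op (CtauD C D \<tau>) \<and> bij_betw (CtauD C D \<tau>) l2 l2
      \<and> bounded_op (the_inv_into l2 (CtauD C D \<tau>))
      \<and> (\<forall>\<alpha> \<beta>. propagator (blockop A B C D) \<tau> \<alpha> \<beta>
                = - coeff (\<lambda>x. the_inv_into l2 (CtauD C D \<tau>) (C x)) \<alpha> \<beta>)
      \<and> (trace_class C \<longrightarrow>
           (\<exists>L. trace_class L \<and> (\<forall>\<alpha> \<beta>. propagator (blockop A B C D) \<tau> \<alpha> \<beta> = coeff L \<alpha> \<beta>)))"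
proof -
  note bA = assms(1) and bB = assms(2) and bC = assms(3) and bD = assms(4)
    and sU = assms(5) and bt = assms(6) and sym = assms(7) and ds = assms(8)
  define U where "U = blockop A B C D"
  define G where "G = CtauD C D \<tau>"
  have Uv: "U v = (\<lambda>n. A (fst v) n + B (snd v) n, \<lambda>n. C (fst v) n + D (snd v) n)" for v
    by (simp add: U_def blockop_def)
  have Gv: "G q = (\<lambda>n. C (\<tau> q) n + D q n)" for q by (simp add: G_def CtauD_def)
  have bG: "bounded_op G" unfolding G_def by (rule ctaud_bop[OF bC bD bt])
  have injU: "inj_on U HH" using sU unfolding symplectic_aut_def bij_betw_def U_def by blast
  have dsU: "\<forall>v\<in>HH. \<exists>x\<in>U ` lagr_T \<tau>. \<exists>y\<in>Hminus. v = vadd x y" "U ` lagr_T \<tau> \<inter> Hminus = {hzero}"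
    using ds unfolding direct_sum_H_def U_def by blast+
  have T_mem: "(\<tau> q, q) \<in> lagr_T \<tau>" if "q \<in> l2" for q using that by (auto simp: lagr_T_def)
  have U0: "U hzero = hzero" by (simp add: Uv hzero_def bop_zero bA bB bC bD)
  have inj: "inj_on G l2"
  proof (rule inj_onI)
    fix q1 q2 assume q1: "q1 \<in> l2" and q2: "q2 \<in> l2" and eq: "G q1 = G q2"
    define q where "q = (\<lambda>n. q1 n - q2 n)"
    have q: "q \<in> l2" unfolding q_def by (rule l2_diff[OF q1 q2])
    have Gq: "G q = (\<lambda>_. 0)" unfolding q_def bop_diff[OF bG q1 q2] eq by simp
    have "U (\<tau> q, q) \<in> U ` lagr_T \<tau>" using T_mem[OF q] by blast
    moreover have "U (\<tau> q, q) \<in> Hminus"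
      unfolding Hminus_def using Gq
      by (simp add: Uv Gv l2_add bop_l2 bA bB bt q fun_eq_iff)
    ultimately have "U (\<tau> q, q) = hzero" using dsU(2) by blast
    then have "U (\<tau> q, q) = U hzero" using U0 by simp
    moreover have "(\<tau> q, q) \<in> HH" "hzero \<in> HH" using q bop_l2[OF bt q] l2_zero by (auto simp: HH_def hzero_def)
    ultimately have "(\<tau> q, q) = hzero" using injU by (meson inj_onD)
    then have "q = (\<lambda>_. 0)" by (simp add: hzero_def)
    then show "q1 = q2" unfolding q_def by (simp add: fun_eq_iff)
  qed
  have img: "G ` l2 = l2"
  proof
    show "G ` l2 \<subseteq> l2" using bop_l2[OF bG] by blast
    show "l2 \<subseteq> G ` l2"
    proof
      fix p assume p: "p \<in> l2"
      have "((\<lambda>_. 0), p) \<in> HH" using p l2_zero by (simp add: HH_def)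
      then obtain u h where u: "u \<in> U ` lagr_T \<tau>" and h: "h \<in> Hminus" and uh: "((\<lambda>_. 0), p) = vadd u h"
        using dsU(1) by blast
      from u obtain q where q: "q \<in> l2" and uq: "u = U (\<tau> q, q)" by (auto simp: lagr_T_def)
      have "p = (\<lambda>n. snd u n + snd h n)" using uh by (simp add: vadd_def)
      also have "\<dots> = G q" using h by (simp add: uq Uv Gv Hminus_def)
      finally show "p \<in> G ` l2" using q by blast
    qed
  qed
  have bij: "bij_betw G l2 l2" using inj img by (simp add: bij_betw_def)
  define Gi where "Gi = the_inv_into l2 G"
  have bGi: "bounded_op Gi" unfolding Gi_def by (rule bop_inverse[OF bG bij])
  have GGi: "G (Gi p) = p" if "p \<in> l2" for p
    unfolding Gi_def by (rule f_the_inv_into_f[OF inj]) (use that img in auto)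
  have GiG: "Gi (G q) = q" if "q \<in> l2" for q
    unfolding Gi_def by (rule the_inv_into_f_f[OF inj that])
  have propU: "propagator U \<tau> \<alpha> \<beta> = - Gi (C (basis_vec \<beta>)) \<alpha>" for \<alpha> \<beta>
  proof -
    have S1: "sharp1_inv \<tau> (dq \<alpha>) = (basis_vec \<alpha>, \<lambda>_. 0)"
      unfolding sharp1_inv_def
    proof (rule the_equality)
      show "(basis_vec \<alpha>, \<lambda>_. 0) \<in> Hminus \<and> (\<forall>t\<in>lagr_T \<tau>. omega (basis_vec \<alpha>, \<lambda>_. 0) t = dq \<alpha> t)"
        by (auto simp: Hminus_def l2_basis lagr_T_def omega_pair pair_basis_left pair_zero_left dq_def)
      fix v assume v: "v \<in> Hminus \<and> (\<forall>t\<in>lagr_T \<tau>. omega v t = dq \<alpha> t)"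
      have vs: "snd v = (\<lambda>_. 0)" using v by (simp add: Hminus_def)
      have "fst v b = basis_vec \<alpha> b" for b
      proof -
        have "omega v (\<tau> (basis_vec b), basis_vec b) = dq \<alpha> (\<tau> (basis_vec b), basis_vec b)"
          using v T_mem[OF l2_basis] by blast
        then have "fst v b = basis_vec b \<alpha>" by (simp add: omega_pair vs pair_basis_right pair_zero_left dq_def)
        then show ?thesis by (simp add: basis_vec_def)
      qed
      then show "v = (basis_vec \<alpha>, \<lambda>_. 0)" using vs by (metis ext prod.collapse)
    qed
    define c where "c = C (basis_vec \<beta>)"
    have cl: "c \<in> l2" unfolding c_def by (rule bop_l2[OF bC l2_basis])
    define yv where "yv = (\<lambda>n. - Gi c n)"
    define xv where "xv = (\<lambda>n. \<tau> yv n + basis_vec \<beta> n)"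
    have yl: "yv \<in> l2" unfolding yv_def by (intro l2_uminus bop_l2[OF bGi cl])
    have xl: "xv \<in> l2" unfolding xv_def by (intro l2_add bop_l2[OF bt yl] l2_basis)
    have Gy: "G yv = (\<lambda>n. - c n)" unfolding yv_def bop_uminus[OF bG bop_l2[OF bGi cl]] GGi[OF cl] ..
    have Cx: "C xv = (\<lambda>n. C (\<tau> yv) n + c n)" unfolding xv_def c_def
      by (rule bop_add[OF bC bop_l2[OF bt yl] l2_basis])
    have key: "pair y (\<tau> q) = pair q (\<tau> y)" if "y \<in> l2" "q \<in> l2" for y q
      by (rule pair_sym_op[OF bt sym that])
    have S2: "sharp2_inv U \<tau> (dq \<beta>) = (xv, yv)"
      unfolding sharp2_inv_def
    proof (rule the_equality)
      have "U (xv, yv) \<in> Hminus"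
      proof -
        have "(\<lambda>n. C xv n + D yv n) = (\<lambda>n. G yv n + c n)" by (simp add: Cx Gv fun_eq_iff)
        also have "\<dots> = (\<lambda>_. 0)" by (simp add: Gy)
        finally show ?thesis by (simp add: Uv Hminus_def l2_add bop_l2 bA bB xl yl)
      qed
      moreover have "omega (xv, yv) t = dq \<beta> t" if t: "t \<in> lagr_T \<tau>" for t
      proof -
        obtain q where q: "q \<in> l2" and tq: "t = (\<tau> q, q)" using t by (auto simp: lagr_T_def)
        have "omega (xv, yv) t = pair xv q - pair yv (\<tau> q)" by (simp add: omega_pair tq)
        also have "pair xv q = pair (\<tau> yv) q + pair (basis_vec \<beta>) q"
          unfolding xv_def by (rule pair_add_left[OF q bop_l2[OF bt yl] l2_basis])
        also have "pair yv (\<tau> q) = pair q (\<tau> yv)" by (rule key[OF yl q])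
        finally show ?thesis by (simp add: pair_comm[of "\<tau> yv"] pair_basis_left dq_def tq)
      qed
      ultimately show "(xv, yv) \<in> HH \<and> U (xv, yv) \<in> Hminus \<and> (\<forall>t\<in>lagr_T \<tau>. omega (xv, yv) t = dq \<beta> t)"
        using xl yl by (simp add: HH_def)
    next
      fix v assume v: "v \<in> HH \<and> U v \<in> Hminus \<and> (\<forall>t\<in>lagr_T \<tau>. omega v t = dq \<beta> t)"
      obtain x y where vxy: "v = (x, y)" by (cases v)
      have x: "x \<in> l2" and y: "y \<in> l2" using v by (auto simp: vxy HH_def)
      have CD: "(\<lambda>n. C x n + D y n) = (\<lambda>_. 0)" using v by (simp add: vxy Uv Hminus_def)
      have xe: "x = (\<lambda>n. \<tau> y n + basis_vec \<beta> n)"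
      proof
        fix b
        have "omega v (\<tau> (basis_vec b), basis_vec b) = dq \<beta> (\<tau> (basis_vec b), basis_vec b)"
          using v T_mem[OF l2_basis] by blast
        moreover have "pair y (\<tau> (basis_vec b)) = \<tau> y b"
          using key[OF y l2_basis] by (simp add: pair_basis_left)
        ultimately have "x b - \<tau> y b = basis_vec b \<beta>"
          by (simp add: vxy omega_pair pair_basis_right dq_def)
        then show "x b = \<tau> y b + basis_vec \<beta> b"
          by (simp add: basis_vec_def algebra_simps split: if_splits)
      qed
      have Cx': "C x = (\<lambda>n. C (\<tau> y) n + c n)" unfolding xe c_def
        by (rule bop_add[OF bC bop_l2[OF bt y] l2_basis])
      have "G y n = - c n" for n
      proof -
        have h1: "C x n + D y n = 0" using fun_cong[OF CD, of n] by simp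
        have h2: "C x n = C (\<tau> y) n + c n" using fun_cong[OF Cx', of n] by simp
        have h3: "(C (\<tau> y) n + D y n) + c n = 0" using h1 unfolding h2 by (simp add: ac_simps)
        then show ?thesis unfolding Gv by (simp add: eq_neg_iff_add_eq_0)
      qed
      then have "G y = (\<lambda>n. - c n)" by (simp add: fun_eq_iff)
      then have "y = Gi (\<lambda>n. - c n)" using GiG[OF y] by simp
      also have "\<dots> = yv" unfolding yv_def by (rule bop_uminus[OF bGi cl])
      finally have "y = yv" .
      then show "v = (xv, yv)" by (simp add: vxy xe xv_def)
    qed
    show ?thesis unfolding propagator_def S1 S2
      by (simp add: omega_pair pair_basis_left pair_zero_left yv_def c_def)
  qed
  have main: "\<forall>\<alpha> \<beta>. propagator (blockop A B C D) \<tau> \<alpha> \<beta> = - coeff (\<lambda>x. the_inv_into l2 (CtauD C D \<tau>) (C x)) \<alpha> \<beta>"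
    using propU by (simp add: U_def Gi_def G_def coeff_def)
  have tc: "trace_class C \<longrightarrow> (\<exists>L. trace_class L \<and> (\<forall>\<alpha> \<beta>. propagator (blockop A B C D) \<tau> \<alpha> \<beta> = coeff L \<alpha> \<beta>))"
  proof
    assume "trace_class C"
    then have "trace_class (\<lambda>v \<alpha>. - Gi (C v) \<alpha>)" by (rule trace_transfer[OF bGi])
    moreover have "\<forall>\<alpha> \<beta>. propagator (blockop A B C D) \<tau> \<alpha> \<beta> = coeff (\<lambda>v \<alpha>. - Gi (C v) \<alpha>) \<alpha> \<beta>"
      using propU by (simp add: U_def coeff_def)
    ultimately show "\<exists>L. trace_class L \<and> (\<forall>\<alpha> \<beta>. propagator (blockop A B C D) \<tau> \<alpha> \<beta> = coeff L \<alpha> \<beta>)" by blast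
  qed
  show ?thesis using bG bij bGi main tc unfolding G_def Gi_def by blast
qed


end
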